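(* Let $(X,Y)$ be any one of the pairs $(F,L)$, $(L,F)$, $(J,j)$, $(j,J)$, $(P,Q)$, $(Q,P)$. Then for all integers $a,b,c,d,e,m$, $$(X_{d-a}Y_{e-b}-X_{e-a}Y_{d-b})X_{m-c}=(X_{d-c}Y_{e-b}-X_{e-c}Y_{d-b})X_{m-a}+(X_{d-a}X_{e-c}-X_{e-a}X_{d-c})Y_{m-b}.$$
   Context: All sequences are indexed by $n\in\mathbb Z$. Fibonacci numbers $F_n$ and Lucas numbers $L_n$: $F_n=F_{n-1}+F_{n-2}$, $L_n=L_{n-1}+L_{n-2}$ for all $n\in\mathbb Z$, with $F_0=0,F_1=1,L_0=2,L_1=1$ (so $F_{-n}=(-1)^{n-1}F_n$, $L_{-n}=(-1)^nL_n$). Jacobsthal numbers $J_n$ and Jacobsthal–Lucas numbers $j_n$: $J_n=J_{n-1}+2J_{n-2}$, $j_n=j_{n-1}+2j_{n-2}$ for all $n\in\mathbb Z$, with $J_0=0,J_1=1,j_0=2,j_1=1$ (so $J_{-n}=(-1)^{n-1}2^{-n}J_n$, $j_{-n}=(-1)^n2^{-n}j_n$, rational for negative index). Pell numbers $P_n$ and Pell–Lucas numbers $Q_n$: $P_n=2P_{n-1}+P_{n-2}$, $Q_n=2Q_{n-1}+Q_{n-2}$ for all $n\in\mathbb Z$, with $P_0=0,P_1=1,Q_0=2,Q_1=2$ (so $P_{-n}=(-1)^{n-1}P_n$, $Q_{-n}=(-1)^nQ_n$). *)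

theory Defs
  imports Complex_Main
begin

text \<open>Second-order linear recurrence w(n) = p w(n-1) + q w(n-2) for all integers n,
  with w(0) = a, w(1) = b (q nonzero).\<close>

fun rec_fwd :: "real \<Rightarrow> real \<Rightarrow> real \<Rightarrow> real \<Rightarrow> nat \<Rightarrow> real" where
  "rec_fwd p q a b 0 = a"
| "rec_fwd p q a b (Suc 0) = b"
| "rec_fwd p q a b (Suc (Suc n)) = p * rec_fwd p q a b (Suc n) + q * rec_fwd p q a b n"

fun rec_bwd :: "real \<Rightarrow> real \<Rightarrow> real \<Rightarrow> real \<Rightarrow> nat \<Rightarrow> real" where
  "rec_bwd p q a b 0 = a"
| "rec_bwd p q a b (Suc 0) = (b - p * a) / q"
| "rec_bwd p q a b (Suc (Suc n)) = (rec_bwd p q a b n - p * rec_bwd p q a b (Suc n)) / q"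

definition lin_rec :: "real \<Rightarrow> real \<Rightarrow> real \<Rightarrow> real \<Rightarrow> int \<Rightarrow> real" where
  "lin_rec p q a b n = (if 0 \<le> n then rec_fwd p q a b (nat n) else rec_bwd p q a b (nat (- n)))"

definition Fib :: "int \<Rightarrow> real" where "Fib = lin_rec 1 1 0 1"
definition Luc :: "int \<Rightarrow> real" where "Luc = lin_rec 1 1 2 1"
definition Jac :: "int \<Rightarrow> real" where "Jac = lin_rec 1 2 0 1"
definition JacL :: "int \<Rightarrow> real" where "JacL = lin_rec 1 2 2 1"
definition Pell :: "int \<Rightarrow> real" where "Pell = lin_rec 2 1 0 1"
definition PellL :: "int \<Rightarrow> real" where "PellL = lin_rec 2 1 2 2"

end

theory Submission
  imports Defs
begin

definition isrec :: "real \<Rightarrow> real \<Rightarrow> (int \<Rightarrow> real) \<Rightarrow> bool" where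
  "isrec p q s \<longleftrightarrow> (\<forall>n. s (n+2) = p * s (n+1) + q * s n)"

lemma lin_rec_isrec:
  assumes q: "q \<noteq> 0"
  shows "isrec p q (lin_rec p q a b)"
  unfolding isrec_def
proof
  fix n :: int
  show "lin_rec p q a b (n+2) = p * lin_rec p q a b (n+1) + q * lin_rec p q a b n"
  proof (cases "n \<ge> 0")
    case True
    then obtain k where k: "n = int k" by (metis nonneg_eq_int)
    have "nat (int k + 2) = Suc (Suc k)" "nat (int k + 1) = Suc k" by auto
    then show ?thesis using k by (simp add: lin_rec_def)
  next
    case False
    show ?thesis
    proof (cases "n = -1")
      case True
      then show ?thesis using q by (simp add: lin_rec_def field_simps)
    next
      case False
      with \<open>\<not> n \<ge> 0\<close> obtain k where k: "n = - int k - 2" proof -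
        have "n \<le> -2" using False \<open>\<not> n \<ge> 0\<close> by linarith
        then have "n = - int (nat (-n-2)) - 2" by simp
        then show ?thesis using that by blast
      qed
      show ?thesis
      proof (cases k)
        case 0
        then show ?thesis using k q by (simp add: lin_rec_def field_simps numeral_eq_Suc)
      next
        case (Suc j)
        have e1: "nat (- (n+2)) = Suc j" "nat (-(n+1)) = Suc (Suc j)" "nat (-n) = Suc (Suc (Suc j))"
          using k Suc by auto
        have "n + 2 < 0" "n + 1 < 0" "n < 0" using k Suc by auto
        then show ?thesis using e1 q by (simp add: lin_rec_def field_simps)
      qed
    qed
  qed
qed

lemma isrec_unique:
  assumes q: "q \<noteq> 0" and s: "isrec p q s" and t: "isrec p q t"
    and h0: "s 0 = t 0" and h1: "s 1 = t 1"
  shows "s n = t n"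
proof -
  have f: "s (int k) = t (int k) \<and> s (int k + 1) = t (int k + 1)" for k
  proof (induction k)
    case 0 then show ?case using h0 h1 by simp
  next
    case (Suc k)
    have "s (int k + 2) = t (int k + 2)"
      using s t Suc unfolding isrec_def by (metis)
    then show ?case using Suc by (simp add: add.commute add.left_commute)
  qed
  have b: "s (- int k) = t (- int k) \<and> s (- int k + 1) = t (- int k + 1)" for k
  proof (induction k)
    case 0 then show ?case using h0 h1 by simp
  next
    case (Suc k)
    have es: "s (- int k + 1) = p * s (- int k) + q * s (- int k - 1)"
      using s unfolding isrec_def by (metis add.commute diff_add_cancel one_add_one add.assoc)
    have et: "t (- int k + 1) = p * t (- int k) + q * t (- int k - 1)"
      using t unfolding isrec_def by (metis add.commute diff_add_cancel one_add_one add.assoc)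
    have "q * s (- int k - 1) = q * t (- int k - 1)" using es et Suc by simp
    then have m1: "s (- int k - 1) = t (- int k - 1)" using q by simp
    have e1: "- int (Suc k) = - int k - 1" and e2: "- int (Suc k) + 1 = - int k" by auto
    have m2: "s (- 1 - int k) = t (- 1 - int k)" proof -
      have "- 1 - int k = - int k - 1" by simp
      then show ?thesis using m1 by metis
    qed
    have e3: "- int k - 1 + 1 = - int k" by simp
    show ?case unfolding e1 e3 using m1 Suc by blast
  qed
  show ?thesis
  proof (cases "n \<ge> 0")
    case True then show ?thesis using f by (metis nonneg_eq_int)
  next
    case False
    then have "n = - int (nat (-n))" by simp
    then show ?thesis using b by metis
  qed
qed

lemma isrec_decomp:
  assumes q: "q \<noteq> 0" and s: "isrec p q s"
  shows "s n = s 0 * lin_rec p q 1 0 n + s 1 * lin_rec p q 0 1 n"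
proof -
  have A: "isrec p q (lin_rec p q 1 0)" and B: "isrec p q (lin_rec p q 0 1)"
    using lin_rec_isrec q by auto
  have C: "isrec p q (\<lambda>n. s 0 * lin_rec p q 1 0 n + s 1 * lin_rec p q 0 1 n)"
    using A B unfolding isrec_def by (simp add: algebra_simps)
  show ?thesis
    by (rule isrec_unique[OF q s C]) (simp_all add: lin_rec_def)
qed

lemma isrec_shift:
  assumes "isrec p q s" shows "isrec p q (\<lambda>n. s (n - a))"
  using assms unfolding isrec_def
  by (metis (no_types, lifting) add.commute add_diff_eq)

lemma main:
  assumes q: "q \<noteq> 0" and X: "isrec p q X" and Y: "isrec p q Y"
  shows "(X (d - a) * Y (e - b) - X (e - a) * Y (d - b)) * X (m - c) =
         (X (d - c) * Y (e - b) - X (e - c) * Y (d - b)) * X (m - a)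
       + (X (d - a) * X (e - c) - X (e - a) * X (d - c)) * Y (m - b)"
proof -
  define A where "A = lin_rec p q 1 0"
  define B where "B = lin_rec p q 0 1"
  have D: "\<And>s n r. isrec p q s \<Longrightarrow> s (n - r) = s (0 - r) * A n + s (1 - r) * B n"
    unfolding A_def B_def
    using isrec_decomp[OF q isrec_shift] by metis
  show ?thesis
    unfolding D[OF X, of d a] D[OF X, of e a] D[OF X, of m a]
      D[OF X, of d c] D[OF X, of e c] D[OF X, of m c]
      D[OF Y, of d b] D[OF Y, of e b] D[OF Y, of m b]
    by (simp add: algebra_simps)
qed

theorem theorem1:
  fixes X Y :: "int \<Rightarrow> real" and a b c d e m :: int
  assumes "(X, Y) \<in> {(Fib, Luc), (Luc, Fib), (Jac, JacL), (JacL, Jac), (Pell, PellL), (PellL, Pell)}"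
  shows "(X (d - a) * Y (e - b) - X (e - a) * Y (d - b)) * X (m - c) =
         (X (d - c) * Y (e - b) - X (e - c) * Y (d - b)) * X (m - a)
       + (X (d - a) * X (e - c) - X (e - a) * X (d - c)) * Y (m - b)"
using assms
proof (elim insertE emptyE)
  assume "(X, Y) = (Fib, Luc)" then have xy: "X = Fib" "Y = Luc" by simp_all
  show ?thesis by (rule main[of 1 1 X Y]) (simp_all add: xy Fib_def Luc_def lin_rec_isrec)
next
  assume "(X, Y) = (Luc, Fib)" then have xy: "X = Luc" "Y = Fib" by simp_all
  show ?thesis by (rule main[of 1 1 X Y]) (simp_all add: xy Fib_def Luc_def lin_rec_isrec)
next
  assume "(X, Y) = (Jac, JacL)" then have xy: "X = Jac" "Y = JacL" by simp_all
  show ?thesis by (rule main[of 2 1 X Y]) (simp_all add: xy Jac_def JacL_def lin_rec_isrec)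
next
  assume "(X, Y) = (JacL, Jac)" then have xy: "X = JacL" "Y = Jac" by simp_all
  show ?thesis by (rule main[of 2 1 X Y]) (simp_all add: xy Jac_def JacL_def lin_rec_isrec)
next
  assume "(X, Y) = (Pell, PellL)" then have xy: "X = Pell" "Y = PellL" by simp_all
  show ?thesis by (rule main[of 1 2 X Y]) (simp_all add: xy Pell_def PellL_def lin_rec_isrec)
next
  assume "(X, Y) = (PellL, Pell)" then have xy: "X = PellL" "Y = Pell" by simp_all
  show ?thesis by (rule main[of 1 2 X Y]) (simp_all add: xy Pell_def PellL_def lin_rec_isrec)
qed

end
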